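(* For parameters $0\le b\le1$ and $0\le c\le1$ with $bc\neq1$, let $\mathcal{N}_{b,c}$ be the qubit channel $\mathcal{N}_{b,c}(O)=K_0OK_0^\dagger+K_1OK_1^\dagger$ with (in the standard basis) $$K_0=\begin{pmatrix}\sqrt{\frac{(1+b)(1+c)}{2(1+bc)}}&0\\0&\sqrt{\frac{(1-b)(1+c)}{2(1-bc)}}\end{pmatrix},\qquad K_1=\begin{pmatrix}0&\sqrt{\frac{(1+b)(1-c)}{2(1-bc)}}\\\sqrt{\frac{(1-b)(1-c)}{2(1+bc)}}&0\end{pmatrix}.$$ If $0\le c'\le c\le1$ and $bc\neq1$, then there exists a qubit quantum channel $\mathcal{M}$ such that $\mathcal{N}_{b,c'}=\mathcal{N}_{b,c}\circ\mathcal{M}$.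
   Context: A qubit quantum channel is a completely positive trace-preserving linear map from $\mathcal{L}(\mathbb{C}^2)$ to $\mathcal{L}(\mathbb{C}^2)$. *)

theory Defs
  imports "HOL-Analysis.Analysis"
begin

type_synonym qmat = "complex^2^2"

definition adj :: "qmat \<Rightarrow> qmat" where
  "adj A = (\<chi> i j. cnj (A $ j $ i))"

definition mscale :: "complex \<Rightarrow> qmat \<Rightarrow> qmat" where
  "mscale c A = (\<chi> i j. c * A $ i $ j)"

definition clinear_map :: "(qmat \<Rightarrow> qmat) \<Rightarrow> bool" where
  "clinear_map M \<longleftrightarrow> (\<forall>A B. M (A + B) = M A + M B) \<and> (\<forall>c A. M (mscale c A) = mscale c (M A))"

text \<open>A block matrix in L(C^n \<otimes> C^2), given by its n x n array of 2x2 blocks X i j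
  (i, j < n), is positive semidefinite: <v, X v> is a nonnegative real for all v.\<close>
definition block_psd :: "nat \<Rightarrow> (nat \<Rightarrow> nat \<Rightarrow> qmat) \<Rightarrow> bool" where
  "block_psd n X \<longleftrightarrow> (\<forall>v :: nat \<Rightarrow> complex^2.
     (let q = (\<Sum>i<n. \<Sum>j<n. \<Sum>k\<in>UNIV. cnj (v i $ k) * ((X i j *v v j) $ k))
      in Im q = 0 \<and> Re q \<ge> 0))"

text \<open>Complete positivity: id_n \<otimes> M is a positive map for every n.\<close>
definition completely_positive :: "(qmat \<Rightarrow> qmat) \<Rightarrow> bool" where
  "completely_positive M \<longleftrightarrow>
     (\<forall>n X. block_psd n X \<longrightarrow> block_psd n (\<lambda>i j. M (X i j)))"

definition trace_preserving :: "(qmat \<Rightarrow> qmat) \<Rightarrow> bool" where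
  "trace_preserving M \<longleftrightarrow> (\<forall>A. trace (M A) = trace A)"

definition qubit_channel :: "(qmat \<Rightarrow> qmat) \<Rightarrow> bool" where
  "qubit_channel M \<longleftrightarrow> clinear_map M \<and> completely_positive M \<and> trace_preserving M"

definition K0 :: "real \<Rightarrow> real \<Rightarrow> qmat" where
  "K0 b c = vector [
     vector [complex_of_real (sqrt ((1+b)*(1+c) / (2*(1+b*c)))), 0],
     vector [0, complex_of_real (sqrt ((1-b)*(1+c) / (2*(1-b*c))))]]"

definition K1 :: "real \<Rightarrow> real \<Rightarrow> qmat" where
  "K1 b c = vector [
     vector [0, complex_of_real (sqrt ((1+b)*(1-c) / (2*(1-b*c))))],
     vector [complex_of_real (sqrt ((1-b)*(1-c) / (2*(1+b*c)))), 0]]"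

definition Nbc :: "real \<Rightarrow> real \<Rightarrow> qmat \<Rightarrow> qmat" where
  "Nbc b c X = K0 b c ** X ** adj (K0 b c) + K1 b c ** X ** adj (K1 b c)"

end

theory Submission
  imports Defs
begin

definition mk0 :: "real \<Rightarrow> real \<Rightarrow> qmat" where
  "mk0 a d = vector [vector [complex_of_real a, 0], vector [0, complex_of_real d]]"
definition mk1 :: "real \<Rightarrow> real \<Rightarrow> qmat" where
  "mk1 g h = vector [vector [0, complex_of_real g], vector [complex_of_real h, 0]]"
definition chan :: "real \<Rightarrow> real \<Rightarrow> real \<Rightarrow> real \<Rightarrow> qmat \<Rightarrow> qmat" where
  "chan a d g h X = mk0 a d ** X ** adj (mk0 a d) + mk1 g h ** X ** adj (mk1 g h)"

lemma chan_entries: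
  "chan a d g h X $ 1 $ 1 = of_real (a^2) * X$1$1 + of_real (g^2) * X$2$2"
  "chan a d g h X $ 1 $ 2 = of_real (a*d) * X$1$2 + of_real (g*h) * X$2$1"
  "chan a d g h X $ 2 $ 1 = of_real (a*d) * X$2$1 + of_real (g*h) * X$1$2"
  "chan a d g h X $ 2 $ 2 = of_real (d^2) * X$2$2 + of_real (h^2) * X$1$1"
  by (simp_all add: chan_def mk0_def mk1_def adj_def matrix_matrix_mult_def sum_2 power2_eq_square algebra_simps)

lemma chan_eqI:
  assumes "\<And>i j. Y $ i $ j = Z $ i $ j" shows "Y = (Z::qmat)"
  using assms by (simp add: vec_eq_iff)

lemma qmat_eq: "(Y::qmat) = Z \<longleftrightarrow> Y$1$1 = Z$1$1 \<and> Y$1$2 = Z$1$2 \<and> Y$2$1 = Z$2$1 \<and> Y$2$2 = Z$2$2"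
  by (auto simp: vec_eq_iff forall_2)

lemma chan_linear: "clinear_map (chan a d g h)"
  unfolding clinear_map_def
  by (simp add: qmat_eq chan_entries mscale_def algebra_simps)

lemma chan_tp:
  assumes "a^2 + h^2 = 1" "d^2 + g^2 = 1"
  shows "trace_preserving (chan a d g h)"
  unfolding trace_preserving_def trace_def sum_2
proof
  fix A
  have "chan a d g h A $ 1 $ 1 + chan a d g h A $ 2 $ 2
     = of_real (a^2 + h^2) * A$1$1 + of_real (d^2+g^2) * A$2$2"
    by (simp add: chan_entries algebra_simps)
  then show "chan a d g h A $ 1 $ 1 + chan a d g h A $ 2 $ 2 = A$1$1 + A$2$2"
    using assms by simp
qed

definition herm :: "complex^2 \<Rightarrow> complex^2 \<Rightarrow> complex" where
  "herm u y = (\<Sum>k\<in>UNIV. cnj (u $ k) * y $ k)"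

lemma herm_conj: "herm u ((A ** Y ** adj A) *v w) = herm (adj A *v u) (Y *v (adj A *v w))"
  by (simp add: herm_def sum_2 matrix_matrix_mult_def matrix_vector_mult_def adj_def algebra_simps)

lemma herm_add: "herm u ((P + Q) *v w) = herm u (P *v w) + herm u (Q *v w)"
  by (simp add: herm_def sum_2 matrix_vector_mult_def algebra_simps sum.distrib)

lemma kraus_cp:
  assumes "block_psd n X"
  shows "block_psd n (\<lambda>i j. A ** X i j ** adj A + B ** X i j ** adj B)"
  unfolding block_psd_def Let_def
proof
  fix v :: "nat \<Rightarrow> complex^2"
  let ?q = "\<lambda>w. (\<Sum>i<n. \<Sum>j<n. herm (w i) (X i j *v w j))"
  have P: "Im (?q w) = 0 \<and> Re (?q w) \<ge> 0" for w
    using assms unfolding block_psd_def Let_def herm_def by metis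
  have eq: "(\<Sum>i<n. \<Sum>j<n. \<Sum>k\<in>UNIV. cnj (v i $ k) * (((A ** X i j ** adj A + B ** X i j ** adj B)) *v v j) $ k)
     = ?q (\<lambda>i. adj A *v v i) + ?q (\<lambda>i. adj B *v v i)" (is "?L = _")
    by (simp add: herm_def[symmetric] herm_add herm_conj sum.distrib)
  show "Im ?L = 0 \<and> 0 \<le> Re ?L"
    unfolding eq using P[of "\<lambda>i. adj A *v v i"] P[of "\<lambda>i. adj B *v v i"] by simp
qed

lemma chan_cp: "completely_positive (chan a d g h)"
  unfolding completely_positive_def chan_def using kraus_cp by blast

lemma chan_comp:
  assumes "a3^2 = a1^2*a2^2+g1^2*h2^2" "g3^2 = a1^2*g2^2+g1^2*d2^2"
    "d3^2 = d1^2*d2^2+h1^2*g2^2" "h3^2 = d1^2*h2^2+h1^2*a2^2"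
    "a3*d3 = a1*d1*(a2*d2) + g1*h1*(g2*h2)" "g3*h3 = a1*d1*(g2*h2) + g1*h1*(a2*d2)"
  shows "chan a3 d3 g3 h3 X = chan a1 d1 g1 h1 (chan a2 d2 g2 h2 X)"
  unfolding qmat_eq chan_entries assms
  by (simp add: algebra_simps)

lemma chan_id: "chan 1 1 0 0 X = X"
  by (simp add: qmat_eq chan_entries)

definition "al b c = sqrt ((1+b)*(1+c) / (2*(1+b*c)))"
definition "be b c = sqrt ((1-b)*(1+c) / (2*(1-b*c)))"
definition "ga b c = sqrt ((1+b)*(1-c) / (2*(1-b*c)))"
definition "de b c = sqrt ((1-b)*(1-c) / (2*(1+b*c)))"

lemma Nbc_chan: "Nbc b c = chan (al b c) (be b c) (ga b c) (de b c)"
  by (simp add: fun_eq_iff Nbc_def chan_def K0_def K1_def mk0_def mk1_def al_def be_def ga_def de_def)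

lemma sq_facts:
  fixes b c :: real
  assumes "0 \<le> b" "b \<le> 1" "0 \<le> c" "c \<le> 1" "b*c < 1"
  shows "(al b c)^2 = (1+b)*(1+c) / (2*(1+b*c))" "(be b c)^2 = (1-b)*(1+c) / (2*(1-b*c))"
    "(ga b c)^2 = (1+b)*(1-c) / (2*(1-b*c))" "(de b c)^2 = (1-b)*(1-c) / (2*(1+b*c))"
proof -
  have "0 \<le> b*c" using assms by simp
  then show "(al b c)^2 = (1+b)*(1+c) / (2*(1+b*c))" "(be b c)^2 = (1-b)*(1+c) / (2*(1-b*c))"
    "(ga b c)^2 = (1+b)*(1-c) / (2*(1-b*c))" "(de b c)^2 = (1-b)*(1-c) / (2*(1+b*c))"
    unfolding al_def be_def ga_def de_def using assms
    by (auto intro!: real_sqrt_pow2 divide_nonneg_pos mult_nonneg_nonneg)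
qed

lemma prod_facts:
  fixes b c :: real
  assumes "0 \<le> b" "b \<le> 1" "0 \<le> c" "c \<le> 1" "b*c < 1"
  shows "al b c * be b c = (1+c)/2 * (sqrt (1-b^2) / sqrt (1-b^2*c^2))"
    "ga b c * de b c = (1-c)/2 * (sqrt (1-b^2) / sqrt (1-b^2*c^2))"
proof -
  have bc: "0 \<le> b*c" using assms by simp
  have e1: "(1+b)*(1+c) / (2*(1+b*c)) * ((1-b)*(1+c) / (2*(1-b*c))) = ((1+c)/2)^2 * ((1-b^2)/(1-b^2*c^2))"
    using assms bc by (simp add: field_simps power2_eq_square)
  have e2: "(1+b)*(1-c) / (2*(1-b*c)) * ((1-b)*(1-c) / (2*(1+b*c))) = ((1-c)/2)^2 * ((1-b^2)/(1-b^2*c^2))"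
    using assms bc by (simp add: field_simps power2_eq_square)
  show "al b c * be b c = (1+c)/2 * (sqrt (1-b^2) / sqrt (1-b^2*c^2))"
    unfolding al_def be_def real_sqrt_mult[symmetric] e1 real_sqrt_divide[symmetric]
    using assms by (simp only: real_sqrt_mult real_sqrt_abs) simp
  show "ga b c * de b c = (1-c)/2 * (sqrt (1-b^2) / sqrt (1-b^2*c^2))"
    unfolding ga_def de_def real_sqrt_mult[symmetric] e2 real_sqrt_divide[symmetric]
    using assms by (simp only: real_sqrt_mult real_sqrt_abs) simp
qed

lemma Nbc_channel:
  fixes b c :: real
  assumes "0 \<le> b" "b \<le> 1" "0 \<le> c" "c \<le> 1" "b*c < 1"
  shows "qubit_channel (Nbc b c)"
proof -
  have bc: "0 \<le> b*c" using assms by simp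
  have p1: "1+b*c > 0" "1-b*c > 0" using assms(5) bc by linarith+
  have "(al b c)^2 + (de b c)^2 = 1" "(be b c)^2 + (ga b c)^2 = 1"
    unfolding sq_facts[OF assms] using p1 by (simp_all add: add_divide_distrib[symmetric] field_simps)
  then show ?thesis unfolding qubit_channel_def Nbc_chan
    using chan_linear chan_cp chan_tp by blast
qed

theorem mainTheorem6:
  fixes b c c' :: real
  assumes "0 \<le> b" "b \<le> 1" "0 \<le> c'" "c' \<le> c" "c \<le> 1" "b * c \<noteq> 1"
  shows "\<exists>M. qubit_channel M \<and> Nbc b c' = Nbc b c \<circ> M"
proof (cases "c = 0")
  case True
  then have "c' = 0" using assms by simp
  have "qubit_channel (chan 1 1 0 0)"
    unfolding qubit_channel_def using chan_linear chan_cp chan_tp[of 1 0 1 0] by simp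
  moreover have "Nbc b c' = Nbc b c \<circ> chan 1 1 0 0"
    using True \<open>c' = 0\<close> by (simp add: fun_eq_iff chan_id)
  ultimately show ?thesis by blast
next
  case False
  then have c0: "c > 0" using assms by simp
  have bc0: "0 \<le> b*c" using assms by simp
  have bc1: "b*c < 1" using assms mult_le_one[of b c] by (simp add: less_le)
  have bc'0: "0 \<le> b*c'" using assms by simp
  have bc'1: "b*c' \<le> b*c" using assms by (simp add: mult_left_mono)
  have bc'2: "b*c' < 1" using bc'1 bc1 by simp
  have r0: "0 \<le> c'/c" "c'/c \<le> 1" using assms c0 by auto
  have rr: "b*c*(c'/c) = b*c'" using c0 by simp
  have rr2: "(b*c)^2*(c'/c)^2 = b^2*c'^2" using c0 by (simp add: field_simps power2_eq_square)
  have bcle: "b*c \<le> 1" using bc1 by simp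
  have c'le: "c' \<le> 1" using assms by simp
  have M1: "b*c*(c'/c) < 1" using rr bc'2 by simp
  have c0': "0 \<le> c" using c0 by simp
  note S1 = sq_facts[OF assms(1,2) c0' assms(5) bc1]
  note S2 = sq_facts[OF bc0 bcle r0 M1]
  note S3 = sq_facts[OF assms(1,2,3) c'le bc'2]
  note P1 = prod_facts[OF assms(1,2) c0' assms(5) bc1]
  note P2 = prod_facts[OF bc0 bcle r0 M1]
  note P3 = prod_facts[OF assms(1,2,3) c'le bc'2]
  have p: "1+b*c > 0" "1-b*c > 0" "1+b*c' > 0" "1-b*c' > 0" using bc0 bc1 bc'0 bc'2 by linarith+
  have q2: "sqrt (1 - b^2*c^2) > 0"
  proof -
    have "b^2*c^2 < 1" using bc1 bc0 by (metis power_mult_distrib power_strict_mono power_one zero_less_numeral pos2 abs_of_nonneg less_one mult_nonneg_nonneg order.strict_trans2 one_power2 power_less_one_iff)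
    then show ?thesis by simp
  qed
  have q3: "sqrt (1 - b^2*c'^2) > 0"
  proof -
    have "b^2*c'^2 < 1" using bc'2 bc'0 by (metis power_mult_distrib power_strict_mono power_one zero_less_numeral pos2 abs_of_nonneg less_one mult_nonneg_nonneg order.strict_trans2 one_power2 power_less_one_iff)
    then show ?thesis by simp
  qed
  have n: "1+b*c \<noteq> 0" "1-b*c \<noteq> 0" "1+b*c' \<noteq> 0" "1-b*c' \<noteq> 0" "c \<noteq> 0"
    "sqrt (1 - b^2*c^2) \<noteq> 0" "sqrt (1 - b^2*c'^2) \<noteq> 0" using p c0 q2 q3 by auto
  have "Nbc b c' = Nbc b c \<circ> Nbc (b*c) (c'/c)"
    unfolding Nbc_chan comp_def fun_eq_iff
  proof
    fix X
    show "chan (al b c') (be b c') (ga b c') (de b c') X =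
      chan (al b c) (be b c) (ga b c) (de b c) (chan (al (b*c) (c'/c)) (be (b*c) (c'/c)) (ga (b*c) (c'/c)) (de (b*c) (c'/c)) X)"
    proof (rule chan_comp)
      show "(al b c')^2 = (al b c)^2 * (al (b*c) (c'/c))^2 + (ga b c)^2 * (de (b*c) (c'/c))^2"
        unfolding S1 S2 S3 rr using n by (simp add: divide_simps) (simp add: algebra_simps)
      show "(ga b c')^2 = (al b c)^2 * (ga (b*c) (c'/c))^2 + (ga b c)^2 * (be (b*c) (c'/c))^2"
        unfolding S1 S2 S3 rr using n by (simp add: divide_simps) (simp add: algebra_simps)
      show "(be b c')^2 = (be b c)^2 * (be (b*c) (c'/c))^2 + (de b c)^2 * (ga (b*c) (c'/c))^2"
        unfolding S1 S2 S3 rr using n by (simp add: divide_simps) (simp add: algebra_simps)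
      show "(de b c')^2 = (be b c)^2 * (de (b*c) (c'/c))^2 + (de b c)^2 * (al (b*c) (c'/c))^2"
        unfolding S1 S2 S3 rr using n by (simp add: divide_simps) (simp add: algebra_simps)
      show "al b c' * be b c' = al b c * be b c * (al (b*c) (c'/c) * be (b*c) (c'/c)) + ga b c * de b c * (ga (b*c) (c'/c) * de (b*c) (c'/c))"
        unfolding P1 P2 P3 rr2 power_mult_distrib using n by (simp add: divide_simps) (simp add: algebra_simps)
      show "ga b c' * de b c' = al b c * be b c * (ga (b*c) (c'/c) * de (b*c) (c'/c)) + ga b c * de b c * (al (b*c) (c'/c) * be (b*c) (c'/c))"
        unfolding P1 P2 P3 rr2 power_mult_distrib using n by (simp add: divide_simps) (simp add: algebra_simps)
    qed
  qed
  moreover have "qubit_channel (Nbc (b*c) (c'/c))"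
    using Nbc_channel[OF bc0 bcle r0 M1] .
  ultimately show ?thesis by blast
qed

end
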